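(* Let $k\in\mathbb{N}$, $R>0$, $S^k=\{y\in\mathbb{R}^{k+1}:|y|=R\}$, and fix $x\in\mathbb{R}^{k+1}$ with $|x|\neq R$. Then for every $\beta\in\mathbb{C}$ there are infinitely many $\alpha\in\mathbb{C}$ such that $$\int_{S^k}\omega(x,y)^\alpha\,dS_y=\int_{S^k}\omega(x,y)^\beta\,dS_y .$$
   Context: For $x\neq y$ in $\mathbb{R}^{k+1}$, $\omega(x,y)=\left|\dfrac{|x|^2-|y|^2}{|x-y|^2}\right|$. $dS_y$ is the surface measure on $S^k$. For $|x|\neq R$ and $y\in S^k$, $\omega(x,y)>0$ and $\omega^\alpha=e^{\alpha\ln\omega}$. *)

theory Defs
  imports "HOL-Analysis.Analysis"
begin

definition omega :: "'a::euclidean_space \<Rightarrow> 'a \<Rightarrow> real" where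
  "omega x y = \<bar>(norm x ^ 2 - norm y ^ 2) / (norm (x - y) ^ 2)\<bar>"

definition cpow_pos :: "real \<Rightarrow> complex \<Rightarrow> complex" where
  "cpow_pos w a = exp (a * complex_of_real (ln w))"

text \<open>Surface measure on the sphere of radius R in a Euclidean space of dimension n,
  via the cone construction: sigma(A) = (n/R) * lebesgue{t y : 0 < t \<le> 1, y \<in> A},
  realised as the push-forward of Lebesgue measure on the punctured ball under
  radial projection y \<mapsto> R y / |y|, scaled by n/R. For n = 1 this is counting
  measure on {-R, R}.\<close>
definition sphere_measure :: "real \<Rightarrow> ('a::euclidean_space) measure" where
  "sphere_measure R =
     scale_measure (ennreal (real DIM('a) / R))
       (distr (restrict_space lborel (ball 0 R - {0})) borel (\<lambda>y. (R / norm y) *\<^sub>R y))"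

end

theory Submission
  imports Defs "HOL-Complex_Analysis.Complex_Analysis"
begin

lemma re_lt_imp_norm_lt:
  fixes w :: complex and T :: real
  assumes "Re w < T" "T > 0"
  shows "norm w < norm (2 * of_real T - w)"
proof -
  have "(norm w)^2 < (norm (2 * of_real T - w))^2"
    using assms unfolding cmod_power2 by (simp add: power2_eq_square algebra_simps)
  then show ?thesis by (simp add: power2_less_imp_less)
qed

lemma linear_growth_entire:
  fixes u :: "complex \<Rightarrow> complex"
  assumes holu: "u holomorphic_on UNIV" and bu: "\<And>z. Re (u z) \<le> A * norm z + B" and A: "A \<ge> 0"
  shows "\<exists>a b. \<forall>z. u z = a * z + b"
proof -
  define v where "v z = u z - u 0" for z
  define B' where "B' = \<bar>B\<bar> + norm (u 0)"
  have holv: "v holomorphic_on UNIV" unfolding v_def by (intro holomorphic_intros holu)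
  have v0: "v 0 = 0" unfolding v_def by simp
  have B'0: "B' \<ge> 0" unfolding B'_def by simp
  have bv: "Re (v z) \<le> A * norm z + B'" for z
  proof -
    have "Re (v z) = Re (u z) - Re (u 0)" unfolding v_def by simp
    moreover have "- Re (u 0) \<le> norm (u 0)" using abs_Re_le_cmod[of "u 0"] by linarith
    ultimately show ?thesis using bu[of z] unfolding B'_def by linarith
  qed
  have key: "norm (v \<xi>) \<le> 2 * (2 * A * norm \<xi> + B' + 1)" for \<xi>
  proof (cases "\<xi> = 0")
    case True then show ?thesis using v0 A B'0 by simp
  next
    case False
    define r where "r = 2 * norm \<xi>"
    define T where "T = A * r + B' + 1"
    have r0: "r > 0" unfolding r_def using False by simp
    have T0: "T > 0" unfolding T_def using r0 A B'0 by (simp add: add_nonneg_pos)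
    define \<phi> where "\<phi> z = v (of_real r * z) / (2 * of_real T - v (of_real r * z))" for z
    have lt: "Re (v (of_real r * z)) < T" if "norm z < 1" for z
    proof -
      have "norm (of_real r * z) \<le> r" using that r0 by (simp add: norm_mult)
      then have "A * norm (of_real r * z) \<le> A * r" using A by (simp add: mult_left_mono)
      then show ?thesis using bv[of "of_real r * z"] unfolding T_def by linarith
    qed
    have nz: "2 * of_real T - v (of_real r * z) \<noteq> 0" if "norm z < 1" for z
    proof
      assume "2 * of_real T - v (of_real r * z) = 0"
      then have "Re (v (of_real r * z)) = 2 * T"
        by (metis Re_complex_of_real eq_iff_diff_eq_0 mult_2 plus_complex.sel(1))
      then show False using lt[OF that] T0 by simp
    qed
    have nz': "v (of_real r * z) \<noteq> 2 * of_real T" "2 * of_real T \<noteq> v (of_real r * z)" if "norm z < 1" for z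
      using nz[OF that] by auto
    have holc: "(\<lambda>z. v (of_real r * z)) holomorphic_on UNIV"
      using holomorphic_on_compose[of "\<lambda>z. of_real r * z" UNIV v] holv
      by (auto simp: o_def intro: holomorphic_on_subset holomorphic_intros)
    have holphi: "\<phi> holomorphic_on ball 0 1"
      unfolding \<phi>_def
      by (intro holomorphic_intros holomorphic_on_subset[OF holc]) (auto simp: nz')
    have phi0: "\<phi> 0 = 0" unfolding \<phi>_def by (simp add: v0)
    have phi1: "norm (\<phi> z) < 1" if "norm z < 1" for z
    proof -
      have "norm (v (of_real r * z)) < norm (2 * of_real T - v (of_real r * z))"
        by (rule re_lt_imp_norm_lt[OF lt[OF that] T0])
      then show ?thesis unfolding \<phi>_def using nz[OF that]
        by (simp add: norm_divide divide_less_eq)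
    qed
    define z0 where "z0 = \<xi> / of_real r"
    have nz0: "norm z0 = 1/2" unfolding z0_def r_def using False by (simp add: norm_divide)
    have "norm (\<phi> z0) \<le> norm z0"
    proof (rule Schwarz_Lemma(1)[OF holphi phi0])
      show "norm (\<phi> z) < 1" if "norm z < 1" for z using phi1[OF that] .
      show "norm z0 < 1" using nz0 by simp
    qed
    moreover have "of_real r * z0 = \<xi>" unfolding z0_def using r0 by simp
    ultimately have "norm (v \<xi>) / norm (2 * of_real T - v \<xi>) \<le> 1/2"
      unfolding \<phi>_def nz0 by (simp add: norm_divide)
    moreover have "2 * of_real T - v \<xi> \<noteq> 0" using nz[of z0] nz0 \<open>of_real r * z0 = \<xi>\<close> by simp
    ultimately have "norm (v \<xi>) \<le> 1/2 * norm (2 * of_real T - v \<xi>)"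
      by (simp add: divide_le_eq)
    also have "\<dots> \<le> 1/2 * (2 * T + norm (v \<xi>))"
      using norm_triangle_ineq4[of "2 * of_real T" "v \<xi>"] T0 by (simp add: norm_mult)
    finally have "norm (v \<xi>) \<le> 2 * T" by simp
    then show ?thesis unfolding T_def r_def by simp
  qed
  have lv: "v \<xi> = (\<Sum>k\<le>1. (deriv^^k) v 0 / fact k * \<xi> ^ k)" for \<xi>
  proof (rule Liouville_polynomial[OF holv, of 1 "4 * A + 2 * B' + 2"])
    fix z :: complex assume z: "1 \<le> norm z"
    have "norm (v z) \<le> 2 * (2 * A * norm z + B' + 1)" by (rule key)
    also have "\<dots> \<le> (4 * A + 2 * B' + 2) * norm z ^ 1"
    proof -
      have "(2*B'+2) * 1 \<le> (2*B'+2) * norm z" using z B'0 by (intro mult_left_mono) auto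
      then show ?thesis by (simp add: algebra_simps)
    qed
    finally show "norm (v z) \<le> (4 * A + 2 * B' + 2) * norm z ^ 1" .
  qed
  have "u z = deriv v 0 * z + u 0" for z
    using lv[of z] v0 unfolding v_def[of z] by (simp add: atMost_Suc algebra_simps)
  then show ?thesis by blast
qed

lemma factor_zeros:
  fixes f :: "complex \<Rightarrow> complex"
  assumes "finite Z" "f holomorphic_on UNIV" "\<And>w. f w = 0 \<Longrightarrow> w \<in> Z" "f w0 \<noteq> 0"
  shows "\<exists>n q. q holomorphic_on UNIV \<and> (\<forall>w. q w \<noteq> 0) \<and> (\<forall>w. f w = (\<Prod>z\<in>Z. (w - z) ^ n z) * q w)"
  using assms
proof (induction Z arbitrary: f w0 rule: finite_induct)
  case empty
  then show ?case by (intro exI[of _ "\<lambda>_. 0"] exI[of _ f]) auto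
next
  case (insert z Z)
  show ?case
  proof (cases "f z = 0")
    case False
    have "\<And>w. f w = 0 \<Longrightarrow> w \<in> Z" using insert.prems(2) False by blast
    from insert.IH[OF insert.prems(1) this insert.prems(3)]
    obtain n q where nq: "q holomorphic_on UNIV" "\<forall>w. q w \<noteq> 0" "\<forall>w. f w = (\<Prod>z\<in>Z. (w - z) ^ n z) * q w"
      by blast
    have pc: "(\<Prod>z'\<in>Z. (w - z') ^ (n(z:=0)) z') = (\<Prod>z'\<in>Z. (w - z') ^ n z')" for w
      using insert.hyps(2) by (intro prod.cong) auto
    show ?thesis
      by (intro exI[of _ "n(z:=0)"] exI[of _ q]) (use nq pc insert.hyps in auto)
  next
    case True
    define k where "k = nat (zorder f z)"
    define g where "g = zor_poly f z"
    have ex: "(if f z = 0 then zorder f z > 0 else zorder f z = 0) \<and> (\<exists>r. r>0 \<and> cball z r \<subseteq> UNIV \<and> g holomorphic_on cball z r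
      \<and> (\<forall>w\<in>cball z r. f w  = g w * (w-z) ^ k \<and> g w \<noteq>0))"
      unfolding k_def g_def
      by (rule zorder_exist_zero[OF insert.prems(1)]) (use insert.prems(3) in auto)
    then obtain r where r: "r > 0" "g holomorphic_on cball z r" "\<And>w. w \<in> cball z r \<Longrightarrow> f w = g w * (w-z) ^ k \<and> g w \<noteq> 0"
      by blast
    have k0: "k > 0" using ex True unfolding k_def by simp
    define f1 where "f1 w = (if w = z then g z else f w / (w - z) ^ k)" for w
    have h1: "f1 holomorphic_on ball z r"
    proof (rule holomorphic_transform[of g])
      show "g holomorphic_on ball z r" using r(2) by (rule holomorphic_on_subset) auto
      fix w assume "w \<in> ball z r"
      then show "g w = f1 w" using r(3)[of w] unfolding f1_def by auto
    qed
    have h2: "f1 holomorphic_on (UNIV - {z})"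
    proof (rule holomorphic_transform[of "\<lambda>w. f w / (w - z) ^ k"])
      show "(\<lambda>w. f w / (w - z) ^ k) holomorphic_on UNIV - {z}"
        by (intro holomorphic_intros holomorphic_on_subset[OF insert.prems(1)]) auto
    qed (auto simp: f1_def)
    have hol1: "f1 holomorphic_on UNIV"
    proof -
      have "f1 holomorphic_on ball z r \<union> (UNIV - {z})"
        by (rule holomorphic_on_Un[OF h1 h2]) auto
      moreover have "ball z r \<union> (UNIV - {z}) = UNIV" using r(1) by auto
      ultimately show ?thesis by simp
    qed
    have f1z: "f1 z \<noteq> 0" unfolding f1_def using r(1) r(3)[of z] by simp
    have zer: "w \<in> Z" if "f1 w = 0" for w
    proof -
      have "w \<noteq> z" using that f1z by auto
      then have "f w = 0" using that unfolding f1_def by simp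
      then show ?thesis using insert.prems(2) \<open>w \<noteq> z\<close> by blast
    qed
    from insert.IH[OF hol1 zer f1z]
    obtain n q where nq: "q holomorphic_on UNIV" "\<forall>w. q w \<noteq> 0" "\<forall>w. f1 w = (\<Prod>z\<in>Z. (w - z) ^ n z) * q w"
      by blast
    have fw: "f w = (w - z) ^ k * f1 w" for w
      using True k0 unfolding f1_def by auto
    have pc: "(\<Prod>z'\<in>Z. (w - z') ^ (n(z:=k)) z') = (\<Prod>z'\<in>Z. (w - z') ^ n z')" for w
      using insert.hyps(2) by (intro prod.cong) auto
    show ?thesis
      by (intro exI[of _ "n(z:=k)"] exI[of _ q]) (use nq pc fw insert.hyps in auto)
  qed
qed

lemma norm_exp_quad:
  fixes z :: complex
  shows "norm (exp z - 1 - z) \<le> norm z ^ 2 * exp (norm z)"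
proof -
  have sums: "(\<lambda>k. z ^ (k + 2) /\<^sub>R fact (k + 2)) sums (exp z - (\<Sum>k<2. z ^ k /\<^sub>R fact k))"
    by (intro sums_split_initial_segment exp_converges)
  have summ: "summable (\<lambda>k. norm z ^ k / fact (k + 2))"
  proof (rule summable_comparison_test)
    show "summable (\<lambda>k. norm z ^ k / fact k)" using summable_exp[of "norm z"]
      by (simp add: inverse_eq_divide mult.commute)
    show "\<exists>N. \<forall>n\<ge>N. norm (norm z ^ n / fact (n + 2)) \<le> norm z ^ n / fact n"
    proof (intro exI[of _ 0] allI impI)
      fix n :: nat
      have f: "fact n \<le> (fact (n+2) :: real)" by (rule fact_mono) auto
      have "norm z ^ n / fact (n + 2) \<le> norm z ^ n / fact n"
        by (rule divide_left_mono[OF f]) auto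
      then show "norm (norm z ^ n / fact (n + 2)) \<le> norm z ^ n / fact n" by simp
    qed
  qed
  have "exp z - 1 - z = (\<Sum>k. z ^ (k + 2) / fact (k + 2))"
    using sums by (simp add: sums_iff scaleR_conv_of_real divide_simps eval_nat_numeral)
  also have "norm \<dots> \<le> (\<Sum>k. norm (z ^ (k + 2) / fact (k + 2)))"
    using summable_norm_exp[of z]
    by (intro summable_norm summable_ignore_initial_segment)
       (auto simp: norm_power norm_divide divide_simps)
  also have "\<dots> = (\<Sum>k. norm z ^ 2 * (norm z ^ k / fact (k + 2)))"
    by (simp add: power_add norm_power norm_divide mult_ac norm_mult power2_eq_square del: of_nat_Suc)
  also have "\<dots> = norm z ^ 2 * (\<Sum>k. norm z ^ k / fact (k + 2))"
    using summ by (rule suminf_mult)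
  also have "\<dots> \<le> norm z ^ 2 * exp (norm z)"
  proof (intro mult_left_mono, rule sums_le)
    show "(\<lambda>k. norm z ^ k / fact (k + 2)) sums (\<Sum>k. norm z ^ k / fact (k + 2))"
      using summ by blast
    show "(\<lambda>k. norm z ^ k / fact k) sums exp (norm z)"
      using exp_converges[of "norm z"] by (simp add: divide_simps)
    fix k :: nat
    show "norm z ^ k / fact (k + 2) \<le> norm z ^ k / fact k"
      by (intro divide_left_mono fact_mono) auto
  qed auto
  finally show ?thesis .
qed

lemma norm_int_le:
  fixes f :: "'b \<Rightarrow> complex"
  assumes "finite_measure N" "integrable N f" "AE y in N. norm (f y) \<le> B"
  shows "norm (integral\<^sup>L N f) \<le> B * measure N (space N)"
proof -
  interpret finite_measure N by fact
  have "norm (integral\<^sup>L N f) \<le> (\<integral>y. norm (f y) \<partial>N)" by (rule integral_norm_bound)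
  also have "\<dots> \<le> (\<integral>y. B \<partial>N)"
    by (rule integral_mono_AE) (use assms in auto)
  also have "\<dots> = B * measure N (space N)" by simp
  finally show ?thesis .
qed

lemma F_bound:
  fixes N :: "'b measure" and l :: "'b \<Rightarrow> real"
  assumes fm: "finite_measure N" and lm: "l \<in> borel_measurable N" and lb: "AE y in N. \<bar>l y\<bar> \<le> M" and M0: "M \<ge> 0"
  shows "integrable N (\<lambda>y. exp (\<alpha> * complex_of_real (l y)))"
    and "norm (\<integral>y. exp (\<alpha> * complex_of_real (l y)) \<partial>N) \<le> exp (\<bar>Re \<alpha>\<bar> * M) * measure N (space N)"
proof -
  interpret finite_measure N by fact
  have AEb: "AE y in N. norm (exp (\<alpha> * complex_of_real (l y))) \<le> exp (\<bar>Re \<alpha>\<bar> * M)"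
    using lb
  proof eventually_elim
    case (elim y)
    have "Re \<alpha> * l y \<le> \<bar>Re \<alpha>\<bar> * \<bar>l y\<bar>" by (metis abs_ge_self abs_mult)
    also have "\<dots> \<le> \<bar>Re \<alpha>\<bar> * M" using elim by (intro mult_left_mono) auto
    finally show ?case by (simp add: norm_exp_eq_Re)
  qed
  show int: "integrable N (\<lambda>y. exp (\<alpha> * complex_of_real (l y)))"
    by (rule integrable_const_bound[OF AEb]) (use lm in measurable)
  show "norm (\<integral>y. exp (\<alpha> * complex_of_real (l y)) \<partial>N) \<le> exp (\<bar>Re \<alpha>\<bar> * M) * measure N (space N)"
    by (rule norm_int_le[OF fm int AEb])
qed

lemma F_deriv:
  fixes N :: "'b measure" and l :: "'b \<Rightarrow> real"
  assumes fm: "finite_measure N" and lm: "l \<in> borel_measurable N" and lb: "AE y in N. \<bar>l y\<bar> \<le> M" and M0: "M \<ge> 0"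
  shows "((\<lambda>\<alpha>. \<integral>y. exp (\<alpha> * complex_of_real (l y)) \<partial>N) has_field_derivative
           (\<integral>y. complex_of_real (l y) * exp (\<alpha> * complex_of_real (l y)) \<partial>N)) (at \<alpha>)"
proof -
  interpret finite_measure N by fact
  define E where "E a y = exp (a * complex_of_real (l y))" for a y
  define F where "F a = integral\<^sup>L N (E a)" for a
  define D where "D = (\<integral>y. complex_of_real (l y) * E \<alpha> y \<partial>N)"
  define V where "V = measure N (space N)"
  have V0: "V \<ge> 0" unfolding V_def by simp
  have intE: "integrable N (E a)" for a unfolding E_def by (rule F_bound(1)[OF fm lm lb M0])
  have intD: "integrable N (\<lambda>y. complex_of_real (l y) * E \<alpha> y)"
  proof (rule integrable_const_bound)
    show "AE y in N. norm (complex_of_real (l y) * E \<alpha> y) \<le> M * exp (\<bar>Re \<alpha>\<bar> * M)"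
      using lb
    proof eventually_elim
      case (elim y)
      have "Re \<alpha> * l y \<le> \<bar>Re \<alpha>\<bar> * \<bar>l y\<bar>" by (metis abs_ge_self abs_mult)
      also have "\<dots> \<le> \<bar>Re \<alpha>\<bar> * M" using elim by (intro mult_left_mono) auto
      finally have "norm (E \<alpha> y) \<le> exp (\<bar>Re \<alpha>\<bar> * M)" unfolding E_def by (simp add: norm_exp_eq_Re)
      then show ?case using elim by (simp add: norm_mult mult_mono)
    qed
  qed (unfold E_def, use lm in measurable)
  define C where "C = exp (\<bar>Re \<alpha>\<bar> * M) * M^2 * exp M * V"
  have est: "norm ((F (\<alpha> + h) - F \<alpha>) / h - D) \<le> C * norm h" if h0: "h \<noteq> 0" and h1: "norm h \<le> 1" for h
  proof -
    define K where "K y = E \<alpha> y * ((exp (h * complex_of_real (l y)) - 1 - h * complex_of_real (l y)) / h)" for y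
    have Keq: "K y = (E (\<alpha> + h) y - E \<alpha> y) / h - complex_of_real (l y) * E \<alpha> y" for y
      unfolding K_def E_def using h0
      by (simp add: field_simps exp_add distrib_right)
    have "integral\<^sup>L N K = (\<integral>y. (E (\<alpha> + h) y - E \<alpha> y) / h \<partial>N) - D"
    proof -
      have "K = (\<lambda>y. (E (\<alpha> + h) y - E \<alpha> y) / h - complex_of_real (l y) * E \<alpha> y)"
        using Keq by auto
      then show ?thesis unfolding D_def
        using Bochner_Integration.integral_diff[OF _ intD, of "\<lambda>y. (E (\<alpha> + h) y - E \<alpha> y) / h"] intE by auto
    qed
    also have "(\<integral>y. (E (\<alpha> + h) y - E \<alpha> y) / h \<partial>N) = (F (\<alpha> + h) - F \<alpha>) / h"
      unfolding F_def integral_divide_zero by (subst Bochner_Integration.integral_diff) (use intE in auto)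
    finally have eq: "integral\<^sup>L N K = (F (\<alpha> + h) - F \<alpha>) / h - D" .
    have intK: "integrable N K"
      unfolding Keq using intE intD by auto
    have "AE y in N. norm (K y) \<le> exp (\<bar>Re \<alpha>\<bar> * M) * M^2 * exp M * norm h"
      using lb
    proof eventually_elim
      case (elim y)
      have "Re \<alpha> * l y \<le> \<bar>Re \<alpha>\<bar> * \<bar>l y\<bar>" by (metis abs_ge_self abs_mult)
      also have "\<dots> \<le> \<bar>Re \<alpha>\<bar> * M" using elim by (intro mult_left_mono) auto
      finally have e1: "norm (E \<alpha> y) \<le> exp (\<bar>Re \<alpha>\<bar> * M)" unfolding E_def by (simp add: norm_exp_eq_Re)
      define w where "w = h * complex_of_real (l y)"
      have nw: "norm w \<le> norm h * M" unfolding w_def using elim by (simp add: norm_mult mult_left_mono)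
      have "norm h * M \<le> 1 * M" using h1 M0 by (intro mult_right_mono) auto
      then have nw1: "norm w \<le> M" using nw by linarith
      have "norm (exp w - 1 - w) \<le> norm w ^ 2 * exp (norm w)" by (rule norm_exp_quad)
      also have "\<dots> \<le> (norm h * M) ^ 2 * exp M"
        using nw nw1 by (intro mult_mono power_mono) auto
      finally have e2: "norm (exp w - 1 - w) \<le> (norm h * M) ^ 2 * exp M" .
      have "norm (K y) = norm (E \<alpha> y) * (norm (exp w - 1 - w) / norm h)"
        unfolding K_def w_def by (simp add: norm_mult norm_divide)
      also have "\<dots> \<le> exp (\<bar>Re \<alpha>\<bar> * M) * ((norm h * M) ^ 2 * exp M / norm h)"
        using e1 e2 by (intro mult_mono divide_right_mono) auto
      also have "\<dots> = exp (\<bar>Re \<alpha>\<bar> * M) * M^2 * exp M * norm h"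
        using h0 by (simp add: power2_eq_square field_simps)
      finally show ?case .
    qed
    from norm_int_le[OF fm intK this]
    show ?thesis unfolding eq C_def V_def by (simp add: algebra_simps)
  qed
  have "((\<lambda>h. (F (\<alpha> + h) - F \<alpha>) / h - D) \<longlongrightarrow> 0) (at 0)"
  proof (rule Lim_null_comparison)
    show "\<forall>\<^sub>F h in at 0. norm ((F (\<alpha> + h) - F \<alpha>) / h - D) \<le> C * norm h"
      unfolding eventually_at using est by (intro exI[of _ 1]) (auto simp: dist_norm)
    show "((\<lambda>h. C * norm h) \<longlongrightarrow> 0) (at (0::complex))"
      by (intro tendsto_eq_intros) auto
  qed
  then have "((\<lambda>h. (F (\<alpha> + h) - F \<alpha>) / h) \<longlongrightarrow> D) (at 0)"
    by (subst Lim_null) 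
  then show ?thesis unfolding DERIV_def F_def D_def E_def .
qed

lemma abstract_main:
  fixes N :: "'b measure" and l :: "'b \<Rightarrow> real" and \<beta> :: complex
  assumes fm: "finite_measure N" and lm: "l \<in> borel_measurable N" and lb0: "AE y in N. \<bar>l y\<bar> \<le> M"
  shows "infinite {\<alpha>. (\<integral>y. exp (\<alpha> * complex_of_real (l y)) \<partial>N) = (\<integral>y. exp (\<beta> * complex_of_real (l y)) \<partial>N)}"
proof
  define M0 where "M0 = max M 0"
  have M0: "M0 \<ge> 0" unfolding M0_def by simp
  have lb: "AE y in N. \<bar>l y\<bar> \<le> M0" using lb0 by eventually_elim (auto simp: M0_def)
  define F where "F a = (\<integral>y. exp (a * complex_of_real (l y)) \<partial>N)" for a
  define V where "V = measure N (space N)"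
  have V0: "V \<ge> 0" unfolding V_def by simp
  define c where "c = F \<beta>"
  define G where "G a = F a - c" for a
  define Z where "Z = {\<alpha>. (\<integral>y. exp (\<alpha> * complex_of_real (l y)) \<partial>N) = (\<integral>y. exp (\<beta> * complex_of_real (l y)) \<partial>N)}"
  assume finZ: "finite Z"
  have Zeq: "G a = 0 \<longleftrightarrow> a \<in> Z" for a unfolding G_def Z_def F_def c_def by simp
  have Fb: "norm (F a) \<le> exp (\<bar>Re a\<bar> * M0) * V" for a
    unfolding F_def V_def by (rule F_bound(2)[OF fm lm lb M0])
  have holF: "F holomorphic_on UNIV"
    unfolding holomorphic_on_open[OF open_UNIV] F_def using F_deriv[OF fm lm lb M0] by blast
  have holG: "G holomorphic_on UNIV" unfolding G_def by (intro holomorphic_intros holF)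
  obtain w0 where w0: "G w0 \<noteq> 0"
  proof -
    have "\<not> (\<forall>w. G w = 0)"
    proof
      assume "\<forall>w. G w = 0"
      then have "Z = UNIV" using Zeq by auto
      then show False using finZ infinite_UNIV_char_0 by auto
    qed
    then show ?thesis using that by blast
  qed
  obtain n q where q: "q holomorphic_on UNIV" "\<And>w. q w \<noteq> 0" and Gq: "\<And>w. G w = (\<Prod>z\<in>Z. (w - z) ^ n z) * q w"
    using factor_zeros[OF finZ holG _ w0] Zeq by blast
  define P where "P w = (\<Prod>z\<in>Z. (w - z) ^ n z)" for w
  obtain h where h: "h holomorphic_on UNIV" "\<And>w. exp (h w) = q w"
    using holomorphic_logarithm_exists[of UNIV q 0] q by auto
  define \<rho> where "\<rho> = 1 + (\<Sum>z\<in>Z. norm z)"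
  have far: "norm (w - z) \<ge> 1" if "norm w \<ge> \<rho>" "z \<in> Z" for w z
  proof -
    have "norm z \<le> (\<Sum>z\<in>Z. norm z)" using that(2) finZ by (intro member_le_sum) auto
    then show ?thesis using that(1) norm_triangle_ineq2[of w z] unfolding \<rho>_def by linarith
  qed
  have Pge1: "norm (P w) \<ge> 1" if "norm w \<ge> \<rho>" for w
  proof -
    have "norm (P w) = (\<Prod>z\<in>Z. norm (w - z) ^ n z)" unfolding P_def by (simp add: prod_norm[symmetric] norm_power)
    also have "\<dots> \<ge> 1" using far[OF that] by (intro prod_ge_1) (auto intro: one_le_power)
    finally show ?thesis .
  qed
  have \<beta>Z: "\<beta> \<in> Z" using Zeq[of \<beta>] unfolding G_def c_def by simp
  have nb: "n \<beta> > 0"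
  proof (rule ccontr)
    assume "\<not> n \<beta> > 0"
    then have nb0: "n \<beta> = 0" by simp
    have "G \<beta> = 0" unfolding G_def c_def by simp
    then have "P \<beta> = 0" using Gq[of \<beta>] q(2)[of \<beta>] unfolding P_def by simp
    then obtain z where "z \<in> Z" "(\<beta> - z) ^ n z = 0" unfolding P_def using finZ by auto
    then show False using nb0 by auto
  qed
  have Pge: "norm (P w) \<ge> norm (w - \<beta>)" if "norm w \<ge> \<rho>" for w
  proof -
    have "P w = (w - \<beta>) ^ n \<beta> * (\<Prod>z\<in>Z - {\<beta>}. (w - z) ^ n z)"
      unfolding P_def using finZ \<beta>Z by (simp add: prod.remove)
    then have e: "norm (P w) = norm (w - \<beta>) ^ n \<beta> * (\<Prod>z\<in>Z - {\<beta>}. norm (w - z) ^ n z)"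
      by (simp add: norm_mult prod_norm[symmetric] norm_power)
    have p1: "(\<Prod>z\<in>Z - {\<beta>}. norm (w - z) ^ n z) \<ge> 1"
      using far[OF that] by (intro prod_ge_1) (auto intro: one_le_power)
    have p2: "norm (w - \<beta>) ^ n \<beta> \<ge> norm (w - \<beta>)"
      using power_increasing[of 1 "n \<beta>" "norm (w - \<beta>)"] far[OF that \<beta>Z] nb by simp
    have "norm (w - \<beta>) ^ n \<beta> * 1 \<le> norm (w - \<beta>) ^ n \<beta> * (\<Prod>z\<in>Z - {\<beta>}. norm (w - z) ^ n z)"
      using p1 by (intro mult_left_mono) auto
    then show ?thesis using e p2 by linarith
  qed
  define K1 where "K1 = V + norm c + 1"
  have K1: "K1 \<ge> 1" unfolding K1_def using V0 by simp
  have bigb: "Re (h w) \<le> M0 * norm w + ln K1" if "norm w \<ge> \<rho>" for w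
  proof -
    have "norm (G w) \<le> norm (F w) + norm c" unfolding G_def by (rule norm_triangle_ineq4)
    also have "\<dots> \<le> exp (\<bar>Re w\<bar> * M0) * V + norm c" using Fb[of w] by simp
    also have "\<dots> \<le> exp (M0 * norm w) * V + exp (M0 * norm w) * (norm c + 1)"
    proof -
      have "\<bar>Re w\<bar> * M0 \<le> M0 * norm w" using abs_Re_le_cmod[of w] M0 by (simp add: mult.commute mult_left_mono)
      then have "exp (\<bar>Re w\<bar> * M0) * V \<le> exp (M0 * norm w) * V" using V0 by (intro mult_right_mono) auto
      moreover have "norm c \<le> 1 * (norm c + 1)" by simp
      moreover have "1 * (norm c + 1) \<le> exp (M0 * norm w) * (norm c + 1)"
        using M0 by (intro mult_right_mono) auto
      ultimately show ?thesis by linarith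
    qed
    also have "\<dots> = exp (M0 * norm w) * K1" unfolding K1_def by (simp add: algebra_simps)
    finally have nG: "norm (G w) \<le> exp (M0 * norm w) * K1" .
    have Pn0: "norm (P w) \<noteq> 0" using Pge1[OF that] by linarith
    have GPq: "G w = P w * q w" using Gq[of w] unfolding P_def .
    have "norm (q w) = norm (G w) / norm (P w)"
      unfolding GPq using Pn0 by (simp add: norm_mult)
    also have "\<dots> \<le> norm (G w)" using Pge1[OF that] by (simp add: divide_le_eq mult_le_cancel_left1)
    finally have "exp (Re (h w)) \<le> exp (M0 * norm w) * K1" using nG h(2)[of w] by (simp add: norm_exp_eq_Re[symmetric])
    then have "Re (h w) \<le> ln (exp (M0 * norm w) * K1)"
      using K1 by (subst ln_ge_iff) auto
    also have "\<dots> = M0 * norm w + ln K1" using K1 by (simp add: ln_mult)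
    finally show ?thesis .
  qed
  obtain B0 where B0: "\<And>w. w \<in> cball 0 \<rho> \<Longrightarrow> Re (h w) \<le> B0"
  proof -
    have "continuous_on (cball 0 \<rho>) (\<lambda>w. Re (h w))"
      using h(1) by (intro continuous_intros holomorphic_on_imp_continuous_on) (auto intro: holomorphic_on_subset)
    then have "compact ((\<lambda>w. Re (h w)) ` cball 0 \<rho>)" by (intro compact_continuous_image) auto
    then obtain B where "\<forall>x\<in>(\<lambda>w. Re (h w)) ` cball 0 \<rho>. norm x \<le> B"
      using compact_imp_bounded bounded_iff by metis
    then have "\<And>w. w \<in> cball 0 \<rho> \<Longrightarrow> Re (h w) \<le> B"
      by (metis (no_types, lifting) abs_le_D1 image_eqI real_norm_def)
    then show ?thesis by (rule that)
  qed
  have allb: "Re (h w) \<le> M0 * norm w + (\<bar>B0\<bar> + \<bar>ln K1\<bar>)" for w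
  proof (cases "norm w \<ge> \<rho>")
    case True then show ?thesis using bigb[of w] by simp
  next
    case False
    then have "Re (h w) \<le> B0" using B0[of w] by simp
    moreover have "0 \<le> M0 * norm w" using M0 by simp
    ultimately show ?thesis by linarith
  qed
  obtain a b where ab: "\<And>w. h w = a * w + b"
    using linear_growth_entire[OF h(1) allb M0] by blast
  define K where "K = (V + norm c) / exp (Re b)"
  define T where "T = \<rho> + norm \<beta> + \<bar>K\<bar> + 1"
  define t where "t = (if Im a \<ge> 0 then - T else T)"
  define w where "w = complex_of_real t * \<i>"
  have \<rho>0: "\<rho> \<ge> 1" unfolding \<rho>_def by (simp add: sum_nonneg)
  have T1: "T \<ge> 1" unfolding T_def using \<rho>0 by simp
  have at: "\<bar>t\<bar> = T" unfolding t_def using T1 by auto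
  have nw: "norm w = T" unfolding w_def using at by (simp add: norm_mult)
  have Rew: "Re w = 0" unfolding w_def by simp
  have Reaw: "Re (a * w) \<ge> 0" unfolding w_def t_def
    using T1 by (auto simp: mult_nonneg_nonpos mult_nonpos_nonneg)
  have "norm (G w) \<le> norm (F w) + norm c" unfolding G_def by (rule norm_triangle_ineq4)
  also have "\<dots> \<le> V + norm c" using Fb[of w] Rew by simp
  finally have up: "norm (G w) \<le> V + norm c" .
  have qw: "q w = exp (a * w + b)" using h(2)[of w] ab[of w] by simp
  have "norm (G w) = norm (P w) * norm (exp (a * w + b))"
    using Gq[of w] unfolding P_def qw by (simp add: norm_mult)
  also have "norm (exp (a * w + b)) = exp (Re (a * w) + Re b)" by (simp only: norm_exp_eq_Re plus_complex.sel)
  finally have "norm (G w) = norm (P w) * exp (Re (a * w) + Re b)" .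
  also have "\<dots> \<ge> norm (P w) * exp (Re b)"
    using Reaw by (intro mult_left_mono) auto
  finally have low1: "norm (G w) \<ge> norm (P w) * exp (Re b)" .
  have "T \<ge> \<rho>" unfolding T_def by simp
  then have "norm (P w) \<ge> norm (w - \<beta>)" using Pge nw by simp
  moreover have "norm (w - \<beta>) \<ge> T - norm \<beta>" using norm_triangle_ineq2[of w \<beta>] nw by simp
  moreover have "T - norm \<beta> > K" unfolding T_def using \<rho>0 by simp
  ultimately have "norm (P w) > K" by linarith
  then have "norm (P w) * exp (Re b) > K * exp (Re b)" by simp
  also have "K * exp (Re b) = V + norm c" unfolding K_def by simp
  finally show False using low1 up by linarith
qed

theorem theorem1:
  fixes x :: "'a::euclidean_space" and R :: real and \<beta> :: complex
  assumes "R > 0" and "norm x \<noteq> R"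
  shows "infinite {\<alpha> :: complex.
           (\<integral>y. cpow_pos (omega x y) \<alpha> \<partial>sphere_measure R)
         = (\<integral>y. cpow_pos (omega x y) \<beta> \<partial>sphere_measure R)}"
proof -
  define D where "D = ball (0::'a) R - {0}"
  define p where "p = (\<lambda>y::'a. (R / norm y) *\<^sub>R y)"
  define r where "r = ennreal (real DIM('a) / R)"
  define N0 where "N0 = restrict_space lborel D"
  have SM: "sphere_measure R = scale_measure r (distr N0 borel p)"
    unfolding sphere_measure_def r_def N0_def D_def p_def ..
  have Dsets: "D \<in> sets lborel" unfolding D_def by simp
  have pm: "p \<in> N0 \<rightarrow>\<^sub>M borel"
    unfolding N0_def p_def by (intro measurable_restrict_space1) measurable
  have spN0: "space N0 = D" unfolding N0_def using Dsets by (simp add: space_restrict_space2)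
  have fin: "finite_measure (sphere_measure R :: 'a measure)"
  proof
    have "emeasure (sphere_measure R :: 'a measure) (space (sphere_measure R :: 'a measure)) = r * emeasure N0 (p -` UNIV \<inter> space N0)"
      unfolding SM space_scale_measure emeasure_scale_measure space_distr
      by (subst emeasure_distr[OF pm]) auto
    also have "\<dots> = r * emeasure lborel D"
      using Dsets spN0 by (simp add: N0_def emeasure_restrict_space)
    also have "emeasure lborel D \<le> emeasure lborel (ball (0::'a) R)"
      unfolding D_def by (intro emeasure_mono) auto
    then have "emeasure lborel D < \<infinity>" using emeasure_lborel_ball_finite le_less_trans by blast
    then have "r * emeasure lborel D < \<infinity>" unfolding r_def
      by (simp add: ennreal_mult_less_top)
    finally show "emeasure (sphere_measure R :: 'a measure) (space (sphere_measure R :: 'a measure)) \<noteq> \<infinity>" by simp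
  qed
  define lo where "lo = \<bar>norm x ^ 2 - R ^ 2\<bar> / (norm x + R) ^ 2"
  define hi where "hi = \<bar>norm x ^ 2 - R ^ 2\<bar> / (norm x - R) ^ 2"
  have xR: "norm x ^ 2 \<noteq> R ^ 2" using assms
    by (metis norm_ge_zero power2_eq_iff_nonneg less_le)
  have lopos: "lo > 0" unfolding lo_def using xR assms(1)
    by (smt (verit, del_insts) divide_pos_pos norm_ge_zero zero_less_power)
  have bnd: "lo \<le> omega x z \<and> omega x z \<le> hi" if "norm z = R" for z
  proof -
    have d1: "norm (x - z) \<le> norm x + R" using norm_triangle_ineq4[of x z] that by simp
    have d2: "\<bar>norm x - R\<bar> \<le> norm (x - z)" using norm_triangle_ineq3[of x z] that by simp
    have d2p: "0 < \<bar>norm x - R\<bar>" using assms by simp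
    have e: "omega x z = \<bar>norm x ^ 2 - R ^ 2\<bar> / norm (x - z) ^ 2"
      unfolding omega_def using that by (simp add: abs_divide)
    have A: "0 < \<bar>norm x ^ 2 - R ^ 2\<bar>" using xR by simp
    have "(norm x - R) ^ 2 \<le> norm (x - z) ^ 2"
      using d2 by (metis abs_ge_zero power2_abs power_mono)
    moreover have "norm (x - z) ^ 2 \<le> (norm x + R) ^ 2" using d1 by (simp add: power_mono)
    moreover have "0 < (norm x - R) ^ 2" using d2p by simp
    ultimately show ?thesis unfolding e lo_def hi_def using A
      by (auto intro!: divide_left_mono mult_pos_pos simp: less_le_trans)
  qed
  define M where "M = max \<bar>ln lo\<bar> \<bar>ln hi\<bar>"
  have lbnd: "\<bar>ln (omega x z)\<bar> \<le> M" if "norm z = R" for z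
  proof -
    have "lo \<le> omega x z" "omega x z \<le> hi" using bnd[OF that] by auto
    then have "ln lo \<le> ln (omega x z)" "ln (omega x z) \<le> ln hi"
      using lopos by auto
    then show ?thesis unfolding M_def by linarith
  qed
  have AE: "AE y in sphere_measure R. \<bar>ln (omega x y)\<bar> \<le> M"
  proof (rule AE_I')
    show "- sphere (0::'a) R \<in> null_sets (sphere_measure R)"
    proof -
      have s: "- sphere (0::'a) R \<in> sets borel" by simp
      have np: "norm (p y) = R" if "y \<in> D" for y
        using that assms(1) unfolding D_def p_def by simp
      have "p -` (- sphere 0 R) \<inter> space N0 = {}"
        unfolding spN0 using np by auto
      then have "emeasure (sphere_measure R) (- sphere (0::'a) R) = 0"
        unfolding SM emeasure_scale_measure by (subst emeasure_distr[OF pm s]) simp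
      moreover have "- sphere (0::'a) R \<in> sets (sphere_measure R)" unfolding SM using s by simp
      ultimately show ?thesis by (intro null_setsI)
    qed
    show "{y \<in> space (sphere_measure R). \<not> \<bar>ln (omega x y)\<bar> \<le> M} \<subseteq> - sphere 0 R"
      using lbnd by auto
  qed
  have mb: "(\<lambda>y. ln (omega x y)) \<in> borel_measurable (borel :: 'a measure)"
    unfolding omega_def by measurable
  have ss: "sets (sphere_measure R) = sets (borel :: 'a measure)" unfolding SM by simp
  have meas: "(\<lambda>y. ln (omega x y)) \<in> borel_measurable (sphere_measure R)"
    unfolding measurable_cong_sets[OF ss refl] by (rule mb)
  show ?thesis
    using abstract_main[OF fin meas AE, of \<beta>] unfolding cpow_pos_def .
qed

end
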